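(* Let $\varphi:(\alpha,\beta)\to\mathbb{R}^n$ with $-\infty\le\alpha<0<\beta\le\infty$. Then $\varphi$ is the coordinate projection of a solution of a Noetherian initial value problem if and only if $\varphi$ is the coordinate projection of a solution of a polynomial initial value problem.
   Context: A Noetherian chain is a sequence of real analytic functions $h_1,\dots,h_r:H\to\mathbb{R}$ on an open connected set $H\subseteq\mathbb{R}^k$ such that for all $i\le k$, $j\le r$ there is a polynomial $q_{ij}\in\mathbb{R}[y_1,\dots,y_k,z_1,\dots,z_r]$ with $\frac{\partial h_j}{\partial y_i}(y)=q_{ij}(y,h_1(y),\dots,h_r(y))$ on $H$. A function $h:H\to\mathbb{R}$ is Noetherian if $h(y)=p(y,h_1(y),\dots,h_r(y))$ for some polynomial $p$ with real coefficients and some Noetherian chain $h_1,\dots,h_r$ on $H$. An initial value problem (IVP) of dimension $m$ is given by a map $F:D\to\mathbb{R}^m$ on an open connected domain $D\subseteq\mathbb{R}^m$ and an initial value $X_0\in D$; it is Noetherian if every component of $F$ is a Noetherian function on $D$, and polynomial if $D=\mathbb{R}^m$ and every component of $F$ is a polynomial. A solution on $(\alpha,\beta)$ is a differentiable $\psi:(\alpha,\beta)\to D$ with $\psi(0)=X_0$ and $\psi'(t)=F(\psi(t))$ for all $t$. We say $\varphi:(\alpha,\beta)\to\mathbb{R}^n$ is the coordinate projection of a solution of an IVP of dimension $m\ge n$ if there is a solution $\psi$ on $(\alpha,\beta)$ of that IVP whose first $n$ coordinates equal $\varphi$. *)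

theory Defs
  imports "HOL-Analysis.Analysis"
begin

text \<open>Points of R^m are represented as functions nat => real vanishing from index m on.
  The topology on nat => real is the product topology, whose restriction to this slice
  is the Euclidean topology of R^m.\<close>

definition slice :: "nat \<Rightarrow> (nat \<Rightarrow> real) set" where
  "slice m = {x. \<forall>i\<ge>m. x i = 0}"

definition open_conn :: "nat \<Rightarrow> (nat \<Rightarrow> real) set \<Rightarrow> bool" where
  "open_conn m D \<longleftrightarrow> D \<subseteq> slice m \<and> openin (top_of_set (slice m)) D \<and> connected D"

inductive poly_fun :: "nat \<Rightarrow> ((nat \<Rightarrow> real) \<Rightarrow> real) \<Rightarrow> bool" for N where
  pconst: "poly_fun N (\<lambda>x. c)"
| pvar: "i < N \<Longrightarrow> poly_fun N (\<lambda>x. x i)"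
| padd: "poly_fun N p \<Longrightarrow> poly_fun N q \<Longrightarrow> poly_fun N (\<lambda>x. p x + q x)"
| pmult: "poly_fun N p \<Longrightarrow> poly_fun N q \<Longrightarrow> poly_fun N (\<lambda>x. p x * q x)"

definition real_analytic_dim :: "nat \<Rightarrow> ((nat \<Rightarrow> real) \<Rightarrow> real) \<Rightarrow> (nat \<Rightarrow> real) set \<Rightarrow> bool" where
  "real_analytic_dim k h H \<longleftrightarrow>
     (\<forall>y\<in>H. \<exists>e>0. \<exists>a :: (nat \<Rightarrow> nat) \<Rightarrow> real.
        \<forall>x\<in>H. (\<Sum>i<k. (x i - y i)^2) < e^2 \<longrightarrow>
          ((\<lambda>\<alpha>. a \<alpha> * (\<Prod>i<k. (x i - y i) ^ \<alpha> i)) has_sum h x) {\<alpha>. \<forall>i\<ge>k. \<alpha> i = 0})"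

definition ext :: "nat \<Rightarrow> nat \<Rightarrow> (nat \<Rightarrow> (nat \<Rightarrow> real) \<Rightarrow> real) \<Rightarrow> (nat \<Rightarrow> real) \<Rightarrow> (nat \<Rightarrow> real)" where
  "ext k r hs y = (\<lambda>i. if i < k then y i else if i < k + r then hs (i - k) y else 0)"

definition noetherian_chain :: "nat \<Rightarrow> (nat \<Rightarrow> real) set \<Rightarrow> nat \<Rightarrow> (nat \<Rightarrow> (nat \<Rightarrow> real) \<Rightarrow> real) \<Rightarrow> bool" where
  "noetherian_chain k H r hs \<longleftrightarrow> open_conn k H \<and>
     (\<forall>j<r. real_analytic_dim k (hs j) H) \<and>
     (\<forall>i<k. \<forall>j<r. \<exists>q. poly_fun (k + r) q \<and>
        (\<forall>y\<in>H. ((\<lambda>s. hs j (y(i := s))) has_real_derivative q (ext k r hs y)) (at (y i))))"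

definition noetherian_fun :: "nat \<Rightarrow> (nat \<Rightarrow> real) set \<Rightarrow> ((nat \<Rightarrow> real) \<Rightarrow> real) \<Rightarrow> bool" where
  "noetherian_fun k H h \<longleftrightarrow> (\<exists>r hs p. noetherian_chain k H r hs \<and> poly_fun (k + r) p \<and>
     (\<forall>y\<in>H. h y = p (ext k r hs y)))"

definition noetherian_ivp :: "nat \<Rightarrow> (nat \<Rightarrow> real) set \<Rightarrow> (nat \<Rightarrow> (nat \<Rightarrow> real) \<Rightarrow> real) \<Rightarrow> (nat \<Rightarrow> real) \<Rightarrow> bool" where
  "noetherian_ivp m D F X0 \<longleftrightarrow> open_conn m D \<and> X0 \<in> D \<and> (\<forall>i<m. noetherian_fun m D (F i))"

definition polynomial_ivp :: "nat \<Rightarrow> (nat \<Rightarrow> real) set \<Rightarrow> (nat \<Rightarrow> (nat \<Rightarrow> real) \<Rightarrow> real) \<Rightarrow> (nat \<Rightarrow> real) \<Rightarrow> bool" where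
  "polynomial_ivp m D F X0 \<longleftrightarrow> D = slice m \<and> X0 \<in> D \<and> (\<forall>i<m. poly_fun m (F i))"

definition ointerval :: "ereal \<Rightarrow> ereal \<Rightarrow> real set" where
  "ointerval a b = {t. a < ereal t \<and> ereal t < b}"

definition is_solution :: "nat \<Rightarrow> (nat \<Rightarrow> real) set \<Rightarrow> (nat \<Rightarrow> (nat \<Rightarrow> real) \<Rightarrow> real) \<Rightarrow> (nat \<Rightarrow> real)
    \<Rightarrow> ereal \<Rightarrow> ereal \<Rightarrow> (real \<Rightarrow> nat \<Rightarrow> real) \<Rightarrow> bool" where
  "is_solution m D F X0 a b \<psi> \<longleftrightarrow> \<psi> 0 = X0 \<and>
     (\<forall>t\<in>ointerval a b. \<psi> t \<in> D \<and>
        (\<forall>i<m. ((\<lambda>s. \<psi> s i) has_real_derivative F i (\<psi> t)) (at t)))"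

definition proj_of_noetherian_ivp :: "nat \<Rightarrow> ereal \<Rightarrow> ereal \<Rightarrow> (real \<Rightarrow> nat \<Rightarrow> real) \<Rightarrow> bool" where
  "proj_of_noetherian_ivp n a b \<phi> \<longleftrightarrow> (\<exists>m D F X0 \<psi>. n \<le> m \<and> noetherian_ivp m D F X0 \<and>
     is_solution m D F X0 a b \<psi> \<and> (\<forall>t\<in>ointerval a b. \<forall>i<n. \<psi> t i = \<phi> t i))"

definition proj_of_polynomial_ivp :: "nat \<Rightarrow> ereal \<Rightarrow> ereal \<Rightarrow> (real \<Rightarrow> nat \<Rightarrow> real) \<Rightarrow> bool" where
  "proj_of_polynomial_ivp n a b \<phi> \<longleftrightarrow> (\<exists>m D F X0 \<psi>. n \<le> m \<and> polynomial_ivp m D F X0 \<and>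
     is_solution m D F X0 a b \<psi> \<and> (\<forall>t\<in>ointerval a b. \<forall>i<n. \<psi> t i = \<phi> t i))"

end

theory Submission
  imports Defs
begin


lemma poly_dep: "poly_fun N p \<Longrightarrow> (\<forall>i<N. x i = x' i) \<Longrightarrow> p x = p x'"
  by (induction rule: poly_fun.induct) auto

lemma poly_subst: "poly_fun N p \<Longrightarrow> (\<forall>i<N. poly_fun N' (\<lambda>z. \<sigma> z i)) \<Longrightarrow> poly_fun N' (\<lambda>z. p (\<sigma> z))"
  by (induction rule: poly_fun.induct) (auto intro: poly_fun.intros)

lemma poly_mono: "poly_fun N p \<Longrightarrow> N \<le> N' \<Longrightarrow> poly_fun N' p"
proof -
  assume a: "poly_fun N p" "N \<le> N'"
  have "\<forall>i<N. poly_fun N' (\<lambda>z. z i)" using a(2) by (auto intro: poly_fun.pvar)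
  from poly_subst[OF a(1) this] show ?thesis by simp
qed

lemma poly_sum: "finite A \<Longrightarrow> (\<forall>a\<in>A. poly_fun N (f a)) \<Longrightarrow> poly_fun N (\<lambda>z. \<Sum>a\<in>A. f a z)"
  by (induction rule: finite_induct) (auto intro: poly_fun.intros)

lemma poly_tendsto: "poly_fun N p \<Longrightarrow> (\<forall>i<N. ((\<lambda>x. w x i) \<longlongrightarrow> L i) F) \<Longrightarrow> ((\<lambda>x. p (w x)) \<longlongrightarrow> p L) F"
  by (induction rule: poly_fun.induct) (auto intro!: tendsto_intros)

lemma box_open:
  fixes U :: "(nat \<Rightarrow> real) set"
  assumes "open U" "y0 \<in> U"
  shows "\<exists>\<delta>>0. \<forall>x. (\<forall>i<k. \<bar>x i - y0 i\<bar> < \<delta>) \<and> (\<forall>i\<ge>k. x i = y0 i) \<longrightarrow> x \<in> U"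
proof -
  have "openin (product_topology (\<lambda>i. euclidean) UNIV) U" using assms(1) unfolding open_fun_def .
  from product_topology_open_contains_basis[OF this assms(2)]
  obtain X where X: "y0 \<in> (\<Pi>\<^sub>E i\<in>UNIV. X i)" "\<And>i. open (X i)" "finite {i. X i \<noteq> UNIV}"
     "(\<Pi>\<^sub>E i\<in>UNIV. X i) \<subseteq> U" by auto
  have "\<forall>i\<in>{i. X i \<noteq> UNIV}. eventually (\<lambda>d. ball (y0 i) d \<subseteq> X i) (at_right 0)"
  proof
    fix i
    have "y0 i \<in> X i" using X(1) by auto
    then obtain d where d: "d > 0" "ball (y0 i) d \<subseteq> X i" using X(2) open_contains_ball by blast
    show "eventually (\<lambda>d. ball (y0 i) d \<subseteq> X i) (at_right 0)"
      unfolding eventually_at_right_field using d by (intro exI[of _ d]) auto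
  qed
  from eventually_ball_finite[OF X(3) this]
  have "eventually (\<lambda>d. \<forall>i\<in>{i. X i \<noteq> UNIV}. ball (y0 i) d \<subseteq> X i) (at_right 0)" .
  then obtain b where b: "b > 0" "\<And>d. d > 0 \<Longrightarrow> d < b \<Longrightarrow> \<forall>i\<in>{i. X i \<noteq> UNIV}. ball (y0 i) d \<subseteq> X i"
    unfolding eventually_at_right_field by auto
  have bb: "\<forall>i\<in>{i. X i \<noteq> UNIV}. ball (y0 i) (b/2) \<subseteq> X i" using b by auto
  show ?thesis
  proof (intro exI[of _ "b/2"] conjI allI impI)
    show "b/2 > 0" using b by auto
    fix x assume x: "(\<forall>i<k. \<bar>x i - y0 i\<bar> < b/2) \<and> (\<forall>i\<ge>k. x i = y0 i)"
    have "x i \<in> X i" for i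
    proof (cases "X i = UNIV")
      case nU: False
      show ?thesis
      proof (cases "i < k")
        case True
        then have "x i \<in> ball (y0 i) (b/2)" using x by (auto simp: dist_real_def abs_minus_commute)
        moreover have "ball (y0 i) (b/2) \<subseteq> X i" using bb nU by blast
        ultimately show ?thesis by blast
      next
        case False
        then show ?thesis using x X(1) by auto
      qed
    qed auto
    then show "x \<in> U" using X(4) by auto
  qed
qed



lemma box_H:
  assumes "open_conn k H" "y0 \<in> H"
  shows "\<exists>\<delta>>0. \<forall>x\<in>slice k. (\<forall>i<k. \<bar>x i - y0 i\<bar> < \<delta>) \<longrightarrow> x \<in> H"
proof -
  have sub: "H \<subseteq> slice k" and op: "openin (top_of_set (slice k)) H" using assms(1) unfolding open_conn_def by auto
  obtain U where U: "open U" "H = U \<inter> slice k" using op by (auto simp: openin_open)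
  have y0s: "y0 \<in> slice k" using sub assms(2) by auto
  obtain \<delta> where d: "\<delta> > 0" "\<forall>x. (\<forall>i<k. \<bar>x i - y0 i\<bar> < \<delta>) \<and> (\<forall>i\<ge>k. x i = y0 i) \<longrightarrow> x \<in> U"
    using box_open[OF U(1), of y0 k] U(2) assms(2) by auto
  show ?thesis
  proof (intro exI[of _ \<delta>] conjI ballI impI)
    fix x assume x: "x \<in> slice k" "\<forall>i<k. \<bar>x i - y0 i\<bar> < \<delta>"
    have "\<forall>i\<ge>k. x i = y0 i" using x(1) y0s by (auto simp: slice_def)
    then show "x \<in> H" using d x U(2) by auto
  qed (use d in auto)
qed

lemma pow_bound:
  fixes d r :: real
  assumes "0 < d" "d \<le> r" "N \<ge> 1"
  shows "d ^ N \<le> (d / r) * r ^ N"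
proof -
  obtain M where N: "N = Suc M" using assms(3) by (cases N) auto
  have "d ^ M \<le> r ^ M" using assms by (intro power_mono) auto
  then have "d * d ^ M \<le> d * r ^ M" using assms by auto
  moreover have "(d / r) * r ^ N = d * r ^ M" using assms N by (auto simp: field_simps)
  ultimately show ?thesis using N by simp
qed

lemma analytic_est:
  assumes oc: "open_conn k H" and an: "real_analytic_dim k h H" and y0: "y0 \<in> H" and ep: "\<epsilon> > 0"
  shows "\<exists>\<delta>>0. \<forall>x\<in>H. (\<forall>i<k. \<bar>x i - y0 i\<bar> < \<delta>) \<longrightarrow> \<bar>h x - h y0\<bar> < \<epsilon>"
proof -
  define A where "A = {\<alpha>::nat\<Rightarrow>nat. \<forall>i\<ge>k. \<alpha> i = 0}"
  obtain e a where e: "e > 0" and ha: "\<And>x. x\<in>H \<Longrightarrow> (\<Sum>i<k. (x i - y0 i)^2) < e^2 \<Longrightarrow>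
          ((\<lambda>\<alpha>. a \<alpha> * (\<Prod>i<k. (x i - y0 i) ^ \<alpha> i)) has_sum h x) A"
    using an y0 unfolding real_analytic_dim_def A_def by blast
  define T where "T x \<alpha> = a \<alpha> * (\<Prod>i<k. (x i - y0 i) ^ \<alpha> i)" for x \<alpha>
  obtain \<delta>0 where d0: "\<delta>0 > 0" "\<forall>x\<in>slice k. (\<forall>i<k. \<bar>x i - y0 i\<bar> < \<delta>0) \<longrightarrow> x \<in> H"
    using box_H[OF oc y0] by auto
  define \<rho> where "\<rho> = min (\<delta>0/2) (e / (real k + 1))"
  have rpos: "\<rho> > 0" using d0 e by (auto simp: \<rho>_def)
  have rd0: "\<rho> < \<delta>0" using d0 by (auto simp: \<rho>_def)
  have "\<rho> \<le> e / (real k + 1)" by (simp add: \<rho>_def)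
  then have "\<rho> * (real k + 1) \<le> e" by (subst (asm) pos_le_divide_eq) auto
  then have "(real k + 1) * \<rho> \<le> e" by (simp only: mult.commute)
  then have "((real k + 1) * \<rho>)^2 \<le> e^2" using rpos by (intro power_mono) auto
  moreover have "real k * \<rho>^2 < ((real k + 1) * \<rho>)^2"
  proof -
    have e1: "(real k + 1)^2 = real k * real k + 2*real k + 1" by (simp add: power2_eq_square algebra_simps)
    have "0 \<le> real k * real k" by simp
    then have kk: "real k < (real k + 1)^2" using e1 by linarith
    have "0 < \<rho>^2" using rpos by simp
    from mult_strict_right_mono[OF kk this] show ?thesis by (simp add: power_mult_distrib)
  qed
  ultimately have kr: "real k * \<rho>^2 < e^2" by linarith
  define x0 where "x0 = (\<lambda>i. if i < k then y0 i + \<rho> else 0)"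
  have x0s: "x0 \<in> slice k" by (auto simp: slice_def x0_def)
  have x0H: "x0 \<in> H" using d0 x0s rpos rd0 by (auto simp: x0_def)
  have "(\<Sum>i<k. (x0 i - y0 i)^2) = real k * \<rho>^2" by (simp add: x0_def)
  then have hx0: "(T x0 has_sum h x0) A" using ha[OF x0H] kr unfolding T_def by auto
  then have "T x0 summable_on A" by (auto simp: summable_on_def)
  then have "(\<lambda>\<alpha>. \<bar>T x0 \<alpha>\<bar>) summable_on A"
    using summable_on_iff_abs_summable_on_real by auto
  then have habs: "((\<lambda>\<alpha>. \<bar>T x0 \<alpha>\<bar>) has_sum (infsum (\<lambda>\<alpha>. \<bar>T x0 \<alpha>\<bar>) A)) A"
    by (rule has_sum_infsum)
  define S where "S = infsum (\<lambda>\<alpha>. \<bar>T x0 \<alpha>\<bar>) A"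
  have S0: "S \<ge> 0" unfolding S_def by (rule infsum_nonneg) auto
  define \<delta> where "\<delta> = min \<rho> (\<epsilon> * \<rho> / (S + 1))"
  have dpos: "\<delta> > 0" using rpos ep S0 by (auto simp: \<delta>_def)
  have dr: "\<delta> \<le> \<rho>" by (auto simp: \<delta>_def)
  have dr2: "\<delta> / \<rho> \<le> \<epsilon> / (S + 1)"
  proof -
    have "\<delta> \<le> \<epsilon> * \<rho> / (S + 1)" by (simp add: \<delta>_def)
    then have "\<delta> / \<rho> \<le> (\<epsilon> * \<rho> / (S + 1)) / \<rho>" using rpos by (intro divide_right_mono) auto
    also have "\<dots> = \<epsilon> / (S + 1)" using rpos by simp
    finally show ?thesis .
  qed
  show ?thesis
  proof (intro exI[of _ \<delta>] conjI ballI impI)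
    show "\<delta> > 0" by fact
    fix x assume xH: "x \<in> H" and xb: "\<forall>i<k. \<bar>x i - y0 i\<bar> < \<delta>"
    have "(\<Sum>i<k. (x i - y0 i)^2) \<le> (\<Sum>i<k. \<rho>^2)"
    proof (rule sum_mono)
      fix i assume "i \<in> {..<k}"
      then have "\<bar>x i - y0 i\<bar> \<le> \<rho>" using xb dr by force
      then show "(x i - y0 i)^2 \<le> \<rho>^2"
        by (metis abs_ge_zero power2_abs power_mono)
    qed
    then have hx: "(T x has_sum h x) A" using ha[OF xH] kr unfolding T_def by auto
    have hy: "(T y0 has_sum h y0) A" using ha[OF y0] e unfolding T_def by auto
    have hy': "((\<lambda>\<alpha>. - T y0 \<alpha>) has_sum (- h y0)) A" using has_sum_uminus[of "T y0" A "- h y0"] hy by simp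
    have hd: "((\<lambda>\<alpha>. T x \<alpha> - T y0 \<alpha>) has_sum (h x - h y0)) A" using has_sum_add[OF hx hy'] by simp
    have pw: "\<bar>T x \<alpha> - T y0 \<alpha>\<bar> \<le> (\<delta> / \<rho>) * \<bar>T x0 \<alpha>\<bar>" if "\<alpha> \<in> A" for \<alpha>
    proof (cases "\<forall>i<k. \<alpha> i = 0")
      case True
      then show ?thesis using rpos dpos by (simp add: T_def)
    next
      case False
      then obtain i0 where i0: "i0 < k" "\<alpha> i0 \<noteq> 0" by auto
      have "(\<Prod>i<k. (y0 i - y0 i) ^ \<alpha> i) = 0"
        using i0 by (simp add: prod_zero_iff) (rule bexI[of _ i0], auto)
      then have "T y0 \<alpha> = 0" unfolding T_def by simp
      define N where "N = (\<Sum>i<k. \<alpha> i)"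
      have "\<alpha> i0 \<le> N" unfolding N_def by (rule member_le_sum) (use i0 in auto)
      then have N1: "N \<ge> 1" using i0(2) by linarith
      have "\<bar>T x \<alpha>\<bar> = \<bar>a \<alpha>\<bar> * (\<Prod>i<k. \<bar>x i - y0 i\<bar> ^ \<alpha> i)"
        by (simp add: T_def abs_mult abs_prod power_abs)
      also have "\<dots> \<le> \<bar>a \<alpha>\<bar> * (\<Prod>i<k. \<delta> ^ \<alpha> i)"
      proof (rule mult_left_mono[OF prod_mono])
        fix i assume "i \<in> {..<k}"
        then have "\<bar>x i - y0 i\<bar> \<le> \<delta>" using xb by force
        then show "0 \<le> \<bar>x i - y0 i\<bar> ^ \<alpha> i \<and> \<bar>x i - y0 i\<bar> ^ \<alpha> i \<le> \<delta> ^ \<alpha> i"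
          by (simp add: power_mono)
      qed simp
      also have "(\<Prod>i<k. \<delta> ^ \<alpha> i) = \<delta> ^ N" by (simp add: N_def power_sum)
      also have "\<bar>a \<alpha>\<bar> * \<delta> ^ N \<le> \<bar>a \<alpha>\<bar> * ((\<delta> / \<rho>) * \<rho> ^ N)"
        using pow_bound[OF dpos dr N1] by (intro mult_left_mono) auto
      also have "\<rho> ^ N = (\<Prod>i<k. (x0 i - y0 i) ^ \<alpha> i)" by (simp add: x0_def N_def power_sum)
      also have "\<bar>a \<alpha>\<bar> * ((\<delta> / \<rho>) * (\<Prod>i<k. (x0 i - y0 i) ^ \<alpha> i)) = (\<delta> / \<rho>) * \<bar>T x0 \<alpha>\<bar>"
        using rpos by (simp add: T_def x0_def abs_mult abs_prod power_abs)
      finally show ?thesis using \<open>T y0 \<alpha> = 0\<close> by simp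
    qed
    have hs: "((\<lambda>\<alpha>. (\<delta> / \<rho>) * \<bar>T x0 \<alpha>\<bar>) has_sum ((\<delta> / \<rho>) * S)) A"
      using has_sum_cmult_right[OF habs] unfolding S_def .
    have hs': "((\<lambda>\<alpha>. - ((\<delta> / \<rho>) * \<bar>T x0 \<alpha>\<bar>)) has_sum (- ((\<delta> / \<rho>) * S))) A"
      using has_sum_uminus[of "\<lambda>\<alpha>. (\<delta> / \<rho>) * \<bar>T x0 \<alpha>\<bar>" A "- ((\<delta> / \<rho>) * S)"] hs by simp
    have "h x - h y0 \<le> (\<delta> / \<rho>) * S"
      by (rule has_sum_mono[OF hd hs]) (use pw in \<open>simp add: abs_le_iff\<close>)
    moreover have "- ((\<delta> / \<rho>) * S) \<le> h x - h y0"
    proof (rule has_sum_mono[OF hs' hd])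
      fix \<alpha> assume "\<alpha> \<in> A"
      from pw[OF this] show "- ((\<delta> / \<rho>) * \<bar>T x0 \<alpha>\<bar>) \<le> T x \<alpha> - T y0 \<alpha>"
        unfolding abs_le_iff by linarith
    qed
    moreover have "(\<delta> / \<rho>) * S < \<epsilon>"
    proof -
      have "(\<delta> / \<rho>) * S \<le> \<epsilon> / (S + 1) * S" using dr2 S0 by (intro mult_right_mono) auto
      also have "\<dots> < \<epsilon>" using ep S0 by (auto simp: field_simps)
      finally show ?thesis .
    qed
    ultimately show "\<bar>h x - h y0\<bar> < \<epsilon>" by linarith
  qed
qed



definition boxcont :: "nat \<Rightarrow> (nat\<Rightarrow>real) set \<Rightarrow> ((nat\<Rightarrow>real)\<Rightarrow>real) \<Rightarrow> (nat\<Rightarrow>real) \<Rightarrow> bool" where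
 "boxcont k H g y0 \<longleftrightarrow> (\<forall>(F::real filter) w. eventually (\<lambda>x. w x \<in> H) F \<longrightarrow>
    (\<forall>i<k. ((\<lambda>x. w x i) \<longlongrightarrow> y0 i) F) \<longrightarrow> ((\<lambda>x. g (w x)) \<longlongrightarrow> g y0) F)"

lemma analytic_boxcont:
  assumes oc: "open_conn k H" and an: "real_analytic_dim k h H" and y0: "y0 \<in> H"
  shows "boxcont k H h y0"
  unfolding boxcont_def
proof (intro allI impI)
  fix F :: "real filter" and w
  assume wH: "eventually (\<lambda>x. w x \<in> H) F" and wt: "\<forall>i<k. ((\<lambda>x. w x i) \<longlongrightarrow> y0 i) F"
  show "((\<lambda>x. h (w x)) \<longlongrightarrow> h y0) F"
  proof (rule tendstoI)
    fix \<epsilon> :: real assume ep: "\<epsilon> > 0"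
    obtain \<delta> where d: "\<delta> > 0" "\<forall>x\<in>H. (\<forall>i<k. \<bar>x i - y0 i\<bar> < \<delta>) \<longrightarrow> \<bar>h x - h y0\<bar> < \<epsilon>"
      using analytic_est[OF oc an y0 ep] by auto
    have "\<forall>i\<in>{..<k}. eventually (\<lambda>x. dist (w x i) (y0 i) < \<delta>) F"
      using wt d(1) tendstoD by blast
    then have "eventually (\<lambda>x. \<forall>i\<in>{..<k}. dist (w x i) (y0 i) < \<delta>) F"
      by (rule eventually_ball_finite[rotated]) auto
    then show "eventually (\<lambda>x. dist (h (w x)) (h y0) < \<epsilon>) F"
      using wH by eventually_elim (use d in \<open>auto simp: dist_real_def\<close>)
  qed
qed

lemma poly_boxcont:
  assumes "poly_fun N p" "\<forall>i<N. boxcont k H (\<lambda>y. c y i) y0"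
  shows "boxcont k H (\<lambda>y. p (c y)) y0"
  unfolding boxcont_def
proof (intro allI impI)
  fix F :: "real filter" and w
  assume "eventually (\<lambda>x. w x \<in> H) F" "\<forall>i<k. ((\<lambda>x. w x i) \<longlongrightarrow> y0 i) F"
  then have "\<forall>i<N. ((\<lambda>x. c (w x) i) \<longlongrightarrow> c y0 i) F" using assms(2) unfolding boxcont_def by blast
  from poly_tendsto[OF assms(1) this] show "((\<lambda>x. p (c (w x))) \<longlongrightarrow> p (c y0)) F" .
qed

lemma mvt_sym:
  fixes f f' :: "real \<Rightarrow> real"
  assumes "\<And>u. \<bar>u - a\<bar> \<le> \<bar>b - a\<bar> \<Longrightarrow> (f has_real_derivative f' u) (at u)"
  shows "\<exists>\<xi>. \<bar>\<xi> - a\<bar> \<le> \<bar>b - a\<bar> \<and> f b - f a = (b - a) * f' \<xi>"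
proof (cases a b rule: linorder_cases)
  case less
  obtain z where "a < z" "z < b" "f b - f a = (b - a) * f' z"
    using MVT2[OF less, of f f'] assms by force
  then show ?thesis by (intro exI[of _ z]) auto
next
  case equal then show ?thesis by auto
next
  case greater
  obtain z where "b < z" "z < a" "f a - f b = (a - b) * f' z"
    using MVT2[OF greater, of f f'] assms by force
  then show ?thesis by (intro exI[of _ z]) (auto simp: algebra_simps)
qed

lemma chain_rule:
  fixes \<gamma> :: "real \<Rightarrow> nat \<Rightarrow> real"
  assumes oc: "open_conn k H" and t0: "\<gamma> t0 \<in> H"
    and ev: "eventually (\<lambda>s. \<gamma> s \<in> slice k) (at t0)"
    and dg: "\<And>i. i < k \<Longrightarrow> ((\<lambda>s. \<gamma> s i) has_real_derivative d i) (at t0)"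
    and part: "\<And>i y. i < k \<Longrightarrow> y \<in> H \<Longrightarrow> ((\<lambda>u. h (y(i:=u))) has_real_derivative g i y) (at (y i))"
    and gc: "\<And>i. i < k \<Longrightarrow> boxcont k H (g i) (\<gamma> t0)"
  shows "((\<lambda>s. h (\<gamma> s)) has_real_derivative (\<Sum>i<k. g i (\<gamma> t0) * d i)) (at t0)"
proof -
  define y0 where "y0 = \<gamma> t0"
  have y0H: "y0 \<in> H" using t0 y0_def by simp
  have y0s: "y0 \<in> slice k" using y0H oc by (auto simp: open_conn_def)
  obtain \<delta>0 where d0: "\<delta>0 > 0" "\<forall>x\<in>slice k. (\<forall>i<k. \<bar>x i - y0 i\<bar> < \<delta>0) \<longrightarrow> x \<in> H"
    using box_H[OF oc y0H] by auto
  have gt: "((\<lambda>s. \<gamma> s i) \<longlongrightarrow> y0 i) (at t0)" if "i < k" for i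
    using DERIV_isCont[OF dg[OF that]] unfolding y0_def isCont_def .
  have "\<forall>i\<in>{..<k}. eventually (\<lambda>s. dist (\<gamma> s i) (y0 i) < \<delta>0) (at t0)"
    using gt d0(1) tendstoD by blast
  then have E1: "eventually (\<lambda>s. \<forall>i\<in>{..<k}. dist (\<gamma> s i) (y0 i) < \<delta>0) (at t0)"
    by (rule eventually_ball_finite[rotated]) auto
  define z where "z l s = (\<lambda>i. if i < l then \<gamma> s i else y0 i)" for l s
  define P where "P l s \<xi> \<longleftrightarrow> \<bar>\<xi> - y0 l\<bar> \<le> \<bar>\<gamma> s l - y0 l\<bar> \<and>
      h ((z l s)(l := \<gamma> s l)) - h ((z l s)(l := y0 l)) = (\<gamma> s l - y0 l) * g l ((z l s)(l := \<xi>))" for l s \<xi>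
  define \<xi> where "\<xi> l s = (SOME x. P l s x)" for l s
  define w where "w l s = (z l s)(l := \<xi> l s)" for l s
  define Good where "Good s \<longleftrightarrow> \<gamma> s \<in> slice k \<and> (\<forall>i\<in>{..<k}. dist (\<gamma> s i) (y0 i) < \<delta>0)" for s
  have EG: "eventually Good (at t0)" using ev E1 unfolding Good_def by eventually_elim auto
  have zH: "(z l s)(l := u) \<in> H" if "Good s" "l < k" "\<bar>u - y0 l\<bar> \<le> \<bar>\<gamma> s l - y0 l\<bar>" for l s u
  proof -
    have A: "(z l s)(l := u) \<in> slice k" using y0s that(2) by (auto simp: slice_def z_def)
    have gl: "\<bar>\<gamma> s l - y0 l\<bar> < \<delta>0" using that(1,2) by (auto simp: Good_def dist_real_def)
    have B: "\<forall>i<k. \<bar>((z l s)(l := u)) i - y0 i\<bar> < \<delta>0"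
    proof (intro allI impI)
      fix i assume ik: "i < k"
      show "\<bar>((z l s)(l := u)) i - y0 i\<bar> < \<delta>0"
      proof (cases "i = l")
        case True then show ?thesis using gl that(3) by simp
      next
        case False
        have "\<bar>\<gamma> s i - y0 i\<bar> < \<delta>0" using that(1) ik by (auto simp: Good_def dist_real_def)
        then show ?thesis using False d0(1) by (auto simp: z_def)
      qed
    qed
    show ?thesis using bspec[OF d0(2) A] B by (rule mp)
  qed
  have Pxi: "P l s (\<xi> l s)" if "Good s" "l < k" for l s
  proof -
    have "\<exists>x. P l s x" unfolding P_def
    proof (rule mvt_sym[of "y0 l" "\<gamma> s l" "\<lambda>u. h ((z l s)(l := u))" "\<lambda>u. g l ((z l s)(l := u))"])
      fix u assume "\<bar>u - y0 l\<bar> \<le> \<bar>\<gamma> s l - y0 l\<bar>"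
      then have H1: "(z l s)(l := u) \<in> H" using zH that by blast
      from part[OF that(2) H1] show "((\<lambda>u. h ((z l s)(l := u))) has_real_derivative g l ((z l s)(l := u))) (at u)"
        by simp
    qed
    then show ?thesis unfolding \<xi>_def by (rule someI_ex)
  qed
  have telesc: "h (\<gamma> s) - h y0 = (\<Sum>l<k. (\<gamma> s l - y0 l) * g l (w l s))" if "Good s" for s
  proof -
    have zk: "z k s = \<gamma> s" using that y0s by (auto simp: z_def Good_def slice_def)
    have z0: "z 0 s = y0" by (auto simp: z_def)
    have step: "h (z (Suc l) s) - h (z l s) = (\<gamma> s l - y0 l) * g l (w l s)" if "l < k" for l
    proof -
      have "z (Suc l) s = (z l s)(l := \<gamma> s l)" "z l s = (z l s)(l := y0 l)"
        by (auto simp: z_def)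
      then show ?thesis using Pxi[OF \<open>Good s\<close> that] unfolding P_def w_def by metis
    qed
    have "h (\<gamma> s) - h y0 = (\<Sum>l<k. h (z (Suc l) s) - h (z l s))"
      by (subst sum_lessThan_telescope) (simp add: zk z0)
    also have "\<dots> = (\<Sum>l<k. (\<gamma> s l - y0 l) * g l (w l s))" using step by simp
    finally show ?thesis .
  qed
  have wt: "((\<lambda>s. g l (w l s)) \<longlongrightarrow> g l y0) (at t0)" if lk: "l < k" for l
  proof -
    have "eventually (\<lambda>s. w l s \<in> H) (at t0)"
      using EG by eventually_elim (use Pxi zH lk in \<open>auto simp: w_def P_def\<close>)
    moreover have "((\<lambda>s. w l s i) \<longlongrightarrow> y0 i) (at t0)" if ik: "i < k" for i
    proof (rule tendstoI)
      fix e :: real assume e: "e > 0"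
      have "eventually (\<lambda>s. dist (\<gamma> s i) (y0 i) < e) (at t0)" using gt[OF ik] e tendstoD by blast
      then show "eventually (\<lambda>s. dist (w l s i) (y0 i) < e) (at t0)"
        using EG
      proof eventually_elim
        case (elim s)
        have "\<bar>\<xi> l s - y0 l\<bar> \<le> \<bar>\<gamma> s l - y0 l\<bar>" using Pxi[OF elim(2) lk] unfolding P_def by auto
        then show ?case using elim(1) e by (auto simp: w_def z_def dist_real_def)
      qed
    qed
    ultimately show ?thesis using gc[OF lk] unfolding boxcont_def y0_def by blast
  qed
  have dq: "((\<lambda>s. (\<gamma> s l - y0 l) / (s - t0)) \<longlongrightarrow> d l) (at t0)" if "l < k" for l
    using dg[OF that] unfolding has_field_derivative_iff y0_def .
  have lim: "((\<lambda>s. \<Sum>l<k. g l (w l s) * ((\<gamma> s l - y0 l) / (s - t0))) \<longlongrightarrow> (\<Sum>l<k. g l y0 * d l)) (at t0)"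
    by (intro tendsto_sum tendsto_mult) (auto intro: wt dq)
  have "eventually (\<lambda>s. (\<Sum>l<k. g l (w l s) * ((\<gamma> s l - y0 l) / (s - t0))) = (h (\<gamma> s) - h (\<gamma> t0)) / (s - t0)) (at t0)"
    using EG
  proof eventually_elim
    case (elim s)
    show ?case unfolding telesc[OF elim] y0_def[symmetric] by (simp add: sum_divide_distrib mult.commute)
  qed
  from tendsto_cong[OF this] lim show ?thesis unfolding has_field_derivative_iff y0_def by simp
qed



lemma transfer1:
  assumes "poly_fun (k + r1) p"
  shows "p (ext k r1 h1 y) = p (ext k (r1 + r2) (\<lambda>j. if j < r1 then h1 j else h2 (j - r1)) y)"
  by (rule poly_dep[OF assms]) (auto simp: ext_def)

definition shf :: "nat \<Rightarrow> nat \<Rightarrow> (nat \<Rightarrow> real) \<Rightarrow> (nat \<Rightarrow> real)" where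
  "shf k r1 z = (\<lambda>i. if i < k then z i else z (i + r1))"

lemma transfer2:
  assumes "poly_fun (k + r2) p"
  shows "p (ext k r2 h2 y) = p (shf k r1 (ext k (r1 + r2) (\<lambda>j. if j < r1 then h1 j else h2 (j - r1)) y))"
  by (rule poly_dep[OF assms]) (auto simp: ext_def shf_def)

lemma transfer2_poly:
  assumes "poly_fun (k + r2) p"
  shows "poly_fun (k + (r1 + r2)) (\<lambda>z. p (shf k r1 z))"
proof (rule poly_subst[OF assms], intro allI impI)
  fix i assume i: "i < k + r2"
  show "poly_fun (k + (r1 + r2)) (\<lambda>z. shf k r1 z i)"
  proof (cases "i < k")
    case True
    then show ?thesis using poly_fun.pvar[of i "k + (r1 + r2)"] by (simp add: shf_def)
  next
    case False
    then show ?thesis using poly_fun.pvar[of "i + r1" "k + (r1 + r2)"] i by (simp add: shf_def)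
  qed
qed

lemma chain_union:
  assumes c1: "noetherian_chain k H r1 h1" and c2: "noetherian_chain k H r2 h2"
  shows "noetherian_chain k H (r1 + r2) (\<lambda>j. if j < r1 then h1 j else h2 (j - r1))"
  (is "noetherian_chain k H _ ?h")
  unfolding noetherian_chain_def
proof (intro conjI allI impI)
  show "open_conn k H" using c1 by (simp add: noetherian_chain_def)
next
  fix j assume j: "j < r1 + r2"
  show "real_analytic_dim k (?h j) H"
    using c1 c2 j by (cases "j < r1") (auto simp: noetherian_chain_def)
next
  fix i j assume i: "i < k" and j: "j < r1 + r2"
  show "\<exists>q. poly_fun (k + (r1 + r2)) q \<and>
        (\<forall>y\<in>H. ((\<lambda>s. ?h j (y(i := s))) has_real_derivative q (ext k (r1 + r2) ?h y)) (at (y i)))"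
  proof (cases "j < r1")
    case True
    obtain q where q: "poly_fun (k + r1) q"
      "\<forall>y\<in>H. ((\<lambda>s. h1 j (y(i := s))) has_real_derivative q (ext k r1 h1 y)) (at (y i))"
      using c1 i True unfolding noetherian_chain_def by blast
    show ?thesis
      by (rule exI[of _ q]) (use q True transfer1[OF q(1), of h1 _ r2 h2] poly_mono[OF q(1)] in auto)
  next
    case False
    then have j2: "j - r1 < r2" using j by simp
    obtain q where q: "poly_fun (k + r2) q"
      "\<forall>y\<in>H. ((\<lambda>s. h2 (j - r1) (y(i := s))) has_real_derivative q (ext k r2 h2 y)) (at (y i))"
      using c2 i j2 unfolding noetherian_chain_def by blast
    show ?thesis
      by (rule exI[of _ "\<lambda>z. q (shf k r1 z)"])
        (use q False transfer2[OF q(1), of h2 _ r1 h1] transfer2_poly[OF q(1), of r1] in auto)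
  qed
qed

lemma multi:
  fixes l :: nat and F :: "nat \<Rightarrow> (nat \<Rightarrow> real) \<Rightarrow> real"
  assumes oc: "open_conn k H"
  shows "(\<forall>i<l. noetherian_fun k H (F i)) \<Longrightarrow> \<exists>r hs P. noetherian_chain k H r hs \<and>
     (\<forall>i<l. poly_fun (k + r) (P i) \<and> (\<forall>y\<in>H. F i y = P i (ext k r hs y)))"
proof (induction l)
  case 0
  have "noetherian_chain k H 0 (\<lambda>_ _. 0)" using oc by (simp add: noetherian_chain_def)
  then show ?case by blast
next
  case (Suc l)
  then obtain r1 h1 P1 where c1: "noetherian_chain k H r1 h1"
     and P1: "\<forall>i<l. poly_fun (k + r1) (P1 i) \<and> (\<forall>y\<in>H. F i y = P1 i (ext k r1 h1 y))" by auto
  obtain r2 h2 p2 where c2: "noetherian_chain k H r2 h2" and p2: "poly_fun (k + r2) p2"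
     and p2e: "\<forall>y\<in>H. F l y = p2 (ext k r2 h2 y)"
    using Suc.prems unfolding noetherian_fun_def by auto
  define P where "P i = (if i < l then P1 i else (\<lambda>z. p2 (shf k r1 z)))" for i
  have "noetherian_chain k H (r1 + r2) (\<lambda>j. if j < r1 then h1 j else h2 (j - r1))"
    by (rule chain_union[OF c1 c2])
  moreover have "\<forall>i<Suc l. poly_fun (k + (r1 + r2)) (P i) \<and>
      (\<forall>y\<in>H. F i y = P i (ext k (r1 + r2) (\<lambda>j. if j < r1 then h1 j else h2 (j - r1)) y))"
  proof (intro allI impI)
    fix i assume i: "i < Suc l"
    show "poly_fun (k + (r1 + r2)) (P i) \<and>
      (\<forall>y\<in>H. F i y = P i (ext k (r1 + r2) (\<lambda>j. if j < r1 then h1 j else h2 (j - r1)) y))"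
    proof (cases "i < l")
      case True
      then show ?thesis using P1 poly_mono[of "k + r1" "P1 i" "k + (r1 + r2)"]
          transfer1[of k r1 "P1 i" h1 _ r2 h2] by (auto simp: P_def)
    next
      case False
      then have "i = l" using i by simp
      then show ?thesis using False p2e transfer2[OF p2, of h2 _ r1 h1] transfer2_poly[OF p2, of r1]
        by (auto simp: P_def)
    qed
  qed
  ultimately show ?case by blast
qed

lemma boxcont_coord: "i < k \<Longrightarrow> boxcont k H (\<lambda>y. y i) y0"
  unfolding boxcont_def by auto

lemma slice_connected: "connected (slice m)"
proof -
  define S where "S = (\<lambda>x. (\<lambda>t::real. (\<lambda>i. t * x i)) ` {0..1}) ` slice m"
  have "slice m = \<Union>S"
  proof
    show "slice m \<subseteq> \<Union>S"
    proof
      fix x assume x: "x \<in> slice m"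
      have "x = (\<lambda>i. 1 * x i)" by simp
      then have "x \<in> (\<lambda>t::real. (\<lambda>i. t * x i)) ` {0..1}" by force
      then show "x \<in> \<Union>S" using x unfolding S_def by blast
    qed
    show "\<Union>S \<subseteq> slice m" unfolding S_def slice_def by auto
  qed
  moreover have "connected (\<Union>S)"
  proof (rule connected_Union)
    fix s assume "s \<in> S"
    then obtain x where s: "s = (\<lambda>t::real. (\<lambda>i. t * x i)) ` {0..1}" unfolding S_def by blast
    have "continuous_on {0..1} (\<lambda>t::real. (\<lambda>i. t * x i))"
      by (intro continuous_on_coordinatewise_then_product continuous_intros)
    then show "connected s" unfolding s by (rule connected_continuous_image) simp
  next
    have "(\<lambda>i. 0) \<in> \<Inter>S" unfolding S_def by (auto intro!: image_eqI[of _ _ 0])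
    then show "\<Inter>S \<noteq> {}" by blast
  qed
  ultimately show ?thesis by simp
qed

lemma open_ointerval: "open (ointerval a b)"
proof -
  have "ointerval a b = {t. a < ereal t} \<inter> {t. ereal t < b}" by (auto simp: ointerval_def)
  moreover have "open {t. a < ereal t}" by (rule open_Collect_less) (intro continuous_intros)+
  moreover have "open {t. ereal t < b}" by (rule open_Collect_less) (intro continuous_intros)+
  ultimately show ?thesis by auto
qed



lemma noeth_to_poly:
  assumes "proj_of_noetherian_ivp n a b \<phi>"
  shows "proj_of_polynomial_ivp n a b \<phi>"
proof -
  obtain m D F X0 \<psi> where nm: "n \<le> m" and niv: "noetherian_ivp m D F X0"
    and sol: "is_solution m D F X0 a b \<psi>" and ph: "\<forall>t\<in>ointerval a b. \<forall>i<n. \<psi> t i = \<phi> t i"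
    using assms unfolding proj_of_noetherian_ivp_def by blast
  have oc: "open_conn m D" and X0: "X0 \<in> D" and nf: "\<forall>i<m. noetherian_fun m D (F i)"
    using niv unfolding noetherian_ivp_def by auto
  have Dsub: "D \<subseteq> slice m" using oc by (simp add: open_conn_def)
  obtain r hs P where ch: "noetherian_chain m D r hs"
    and P: "\<forall>i<m. poly_fun (m + r) (P i) \<and> (\<forall>y\<in>D. F i y = P i (ext m r hs y))"
    using multi[OF oc nf] by blast
  have "\<forall>i j. \<exists>q. i < m \<longrightarrow> j < r \<longrightarrow> poly_fun (m + r) q \<and>
        (\<forall>y\<in>D. ((\<lambda>s. hs j (y(i := s))) has_real_derivative q (ext m r hs y)) (at (y i)))"
    using ch unfolding noetherian_chain_def by blast
  then obtain Q where Q: "\<And>i j. i < m \<Longrightarrow> j < r \<Longrightarrow> poly_fun (m + r) (Q i j) \<and>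
        (\<forall>y\<in>D. ((\<lambda>s. hs j (y(i := s))) has_real_derivative Q i j (ext m r hs y)) (at (y i)))"
    by metis
  have an: "\<And>j. j < r \<Longrightarrow> real_analytic_dim m (hs j) D" using ch unfolding noetherian_chain_def by blast
  define F' where "F' i = (if i < m then P i else (\<lambda>z. \<Sum>l<m. Q l (i - m) z * P l z))" for i
  define \<psi>' where "\<psi>' t = ext m r hs (\<psi> t)" for t
  define X0' where "X0' = ext m r hs X0"
  have piv: "polynomial_ivp (m + r) (slice (m + r)) F' X0'"
    unfolding polynomial_ivp_def
  proof (intro conjI allI impI)
    show "X0' \<in> slice (m + r)" by (auto simp: X0'_def slice_def ext_def)
    fix i assume i: "i < m + r"
    show "poly_fun (m + r) (F' i)"
    proof (cases "i < m")
      case True then show ?thesis using P by (simp add: F'_def)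
    next
      case False
      then have "i - m < r" using i by simp
      then have "\<forall>l\<in>{..<m}. poly_fun (m + r) (\<lambda>z. Q l (i - m) z * P l z)"
        using Q P by (auto intro: poly_fun.pmult)
      then show ?thesis using False by (simp add: F'_def poly_sum)
    qed
  qed simp
  have openI: "open (ointerval a b)" by (rule open_ointerval)
  have issol: "is_solution (m + r) (slice (m + r)) F' X0' a b \<psi>'"
    unfolding is_solution_def
  proof (intro conjI ballI allI impI)
    show "\<psi>' 0 = X0'" using sol by (simp add: is_solution_def \<psi>'_def X0'_def)
    fix t assume t: "t \<in> ointerval a b"
    show "\<psi>' t \<in> slice (m + r)" by (auto simp: \<psi>'_def slice_def ext_def)
    have \<psi>tD: "\<psi> t \<in> D" and dpsi: "\<And>l. l < m \<Longrightarrow> ((\<lambda>s. \<psi> s l) has_real_derivative F l (\<psi> t)) (at t)"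
      using sol t unfolding is_solution_def by auto
    have Fe: "F l (\<psi> t) = P l (\<psi>' t)" if "l < m" for l using P that \<psi>tD by (simp add: \<psi>'_def)
    fix i assume i: "i < m + r"
    show "((\<lambda>s. \<psi>' s i) has_real_derivative F' i (\<psi>' t)) (at t)"
    proof (cases "i < m")
      case True
      have "(\<lambda>s. \<psi>' s i) = (\<lambda>s. \<psi> s i)" using True by (auto simp: \<psi>'_def ext_def)
      then show ?thesis using dpsi[OF True] Fe[OF True] True by (simp add: F'_def)
    next
      case False
      define j where "j = i - m"
      have j: "j < r" using i False by (simp add: j_def)
      have fe: "(\<lambda>s. \<psi>' s i) = (\<lambda>s. hs j (\<psi> s))" using False i by (auto simp: \<psi>'_def ext_def j_def)
      have ev: "eventually (\<lambda>s. \<psi> s \<in> slice m) (at t)"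
      proof -
        have "eventually (\<lambda>s. s \<in> ointerval a b) (at t)"
          using eventually_at_topological openI t by blast
        then show ?thesis
          by eventually_elim (use sol Dsub in \<open>auto simp: is_solution_def\<close>)
      qed
      have gc: "boxcont m D (\<lambda>y. Q l j (ext m r hs y)) (\<psi> t)" if l: "l < m" for l
      proof (rule poly_boxcont[where N="m + r" and p="Q l j" and c="ext m r hs"])
        show "poly_fun (m + r) (Q l j)" using Q[OF l j] by blast
        show "\<forall>ia<m + r. boxcont m D (\<lambda>y. ext m r hs y ia) (\<psi> t)"
        proof (intro allI impI)
          fix ia assume ia: "ia < m + r"
          show "boxcont m D (\<lambda>y. ext m r hs y ia) (\<psi> t)"
          proof (cases "ia < m")
            case True
            then have "(\<lambda>y. ext m r hs y ia) = (\<lambda>y. y ia)" by (auto simp: ext_def)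
            then show ?thesis using boxcont_coord[OF True] by simp
          next
            case False
            then have "(\<lambda>y. ext m r hs y ia) = hs (ia - m)" using ia by (auto simp: ext_def)
            moreover have "ia - m < r" using ia False by simp
            ultimately show ?thesis using analytic_boxcont[OF oc an \<psi>tD] by simp
          qed
        qed
      qed
      have "((\<lambda>s. hs j (\<psi> s)) has_real_derivative (\<Sum>l<m. Q l j (ext m r hs (\<psi> t)) * F l (\<psi> t))) (at t)"
      proof -
        have part: "\<And>l y. l < m \<Longrightarrow> y \<in> D \<Longrightarrow> ((\<lambda>u. hs j (y(l:=u))) has_real_derivative Q l j (ext m r hs y)) (at (y l))"
          using Q[OF _ j] by blast
        show ?thesis by (rule chain_rule[OF oc \<psi>tD ev dpsi part gc])
      qed
      moreover have "(\<Sum>l<m. Q l j (ext m r hs (\<psi> t)) * F l (\<psi> t)) = F' i (\<psi>' t)"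
        using False Fe by (simp add: F'_def j_def \<psi>'_def)
      ultimately show ?thesis using fe by simp
    qed
  qed
  have "\<forall>t\<in>ointerval a b. \<forall>i<n. \<psi>' t i = \<phi> t i" using ph nm by (auto simp: \<psi>'_def ext_def)
  then show ?thesis unfolding proj_of_polynomial_ivp_def using piv issol nm
    by (intro exI[of _ "m + r"] exI[of _ "slice (m + r)"] exI[of _ F'] exI[of _ X0'] exI[of _ \<psi>']) auto
qed

lemma poly_to_noeth:
  assumes "proj_of_polynomial_ivp n a b \<phi>"
  shows "proj_of_noetherian_ivp n a b \<phi>"
proof -
  obtain m D F X0 \<psi> where nm: "n \<le> m" and piv: "polynomial_ivp m D F X0"
    and sol: "is_solution m D F X0 a b \<psi>" and ph: "\<forall>t\<in>ointerval a b. \<forall>i<n. \<psi> t i = \<phi> t i"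
    using assms unfolding proj_of_polynomial_ivp_def by blast
  have D: "D = slice m" and X0: "X0 \<in> D" and pf: "\<forall>i<m. poly_fun m (F i)"
    using piv unfolding polynomial_ivp_def by auto
  have oc: "open_conn m D" using D slice_connected by (simp add: open_conn_def)
  have "noetherian_fun m D (F i)" if i: "i < m" for i
    unfolding noetherian_fun_def
  proof (intro exI conjI)
    show "noetherian_chain m D 0 (\<lambda>_ _. 0)" using oc by (simp add: noetherian_chain_def)
    show "poly_fun (m + 0) (F i)" using pf i by simp
    show "\<forall>y\<in>D. F i y = F i (ext m 0 (\<lambda>_ _. 0) y)"
      using poly_dep[of m "F i"] pf i by (auto simp: ext_def)
  qed
  then have "noetherian_ivp m D F X0" using oc X0 by (simp add: noetherian_ivp_def)
  then show ?thesis unfolding proj_of_noetherian_ivp_def using nm sol ph by blast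
qed

theorem proposition7p4:
  fixes n :: nat and \<alpha> \<beta> :: ereal and \<phi> :: "real \<Rightarrow> nat \<Rightarrow> real"
  assumes "\<alpha> < 0" and "0 < \<beta>"
  shows "proj_of_noetherian_ivp n \<alpha> \<beta> \<phi> \<longleftrightarrow> proj_of_polynomial_ivp n \<alpha> \<beta> \<phi>"
  using noeth_to_poly poly_to_noeth by blast


end
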